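(* Let $n\ge 2$ and assume the standing assumptions in the context hold. Let $(\nu,\mu)\in\mathbb{S}^2$ with $\nu\ne\mu$ be such that $\mathcal N_{\nu,\mu}$ is nonempty and $\operatorname{rank}(\Psi_{\nu,\mu})=n$. Then $$T_\mu^{-1}T_\nu=\hat{\mathcal O}_\mu^\dagger\,\mathcal Z_{\nu,\mu}\,\Psi_{\nu,\mu}^\dagger.$$ Here $\hat{\mathcal O}_\mu^\dagger=(\hat{\mathcal O}_\mu^T\hat{\mathcal O}_\mu)^{-1}\hat{\mathcal O}_\mu^T$ and $\Psi_{\nu,\mu}^\dagger=\Psi_{\nu,\mu}^T(\Psi_{\nu,\mu}\Psi_{\nu,\mu}^T)^{-1}$. In particular, $T_\mu^{-1}T_\nu$ is uniquely determined by the data $(u,\varphi,y)$ and the estimates $\hat{\mathcal P}$.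
   Context: **System data.** Consider the LSS $$x(k+1)=A_{\varphi(k)}x(k)+B_{\varphi(k)}u(k),\qquad y(k)=C_{\varphi(k)}x(k)+D_{\varphi(k)}u(k),$$ with $u(k)\in\mathbb{R}^m$, $y(k)\in\mathbb{R}^p$, $x(k)\in\mathbb{R}^n$. The switching sequence $\varphi:[1,N]\to\mathbb{S}=\{1,\dots,\sigma\}$ is surjective, and the discrete states are $\mathcal P_j=(A_j,B_j,C_j,D_j)$. **Switching times and dwell times.** Write $k_0=1<k_1<\dots<k_{i^*}<k_{i^*+1}=N$, where $\varphi$ is constant on each $[k_i,k_{i+1})$ and changes value at each $k_i$, $1\le i\le i^*$. Set $\delta_i=k_{i+1}-k_i$ and $\delta_*=\min_{0\le i\le i^*}\delta_i$. **Standing assumptions.** - Each $\mathcal P_j$ is minimal of McMillan degree $n$, has invertible $A_j$, and is BIBO stable. - $\delta_*\ge n$. - Local estimates $\hat{\mathcal P}_j=(\hat A_j,\hat B_j,\hat C_j,\hat D_j)$ are given, one per mode $j$. For some unknown nonsingular $T_j$ they satisfy $$\hat A_j=T_j^{-1}A_jT_j,\quad \hat B_j=T_j^{-1}B_j,\quad \hat C_j=C_jT_j,\quad \hat D_j=D_j.$$ **Constructions.** Let $q=\delta_*-1$. For a mode $j$, let $$\hat{\mathcal O}_j=[\hat C_j^T\ (\hat C_j\hat A_j)^T\cdots(\hat C_j\hat A_j^{q})^T]^T,$$ and let $\hat\Gamma_j$ be the block lower-triangular Toeplitz matrix with diagonal blocks $\hat D_j$ and $(r,s)$ block $\hat C_j\hat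 A_j^{r-s-1}\hat B_j$ for $r>s$ (block size $(q+1)\times(q+1)$). For $1\le i\le i^*$, write $\nu=\varphi(k_{i-1})$ and $\mu=\varphi(k_i)$. Define the following quantities. - The state estimate $$\hat x(k_{i-1})=\hat{\mathcal O}_\nu^\dagger\,(Y_{i-1}-\hat\Gamma_\nu U_{i-1}),$$ where $Y_{i-1}=[y(k_{i-1})^T\cdots y(k_{i-1}+q)^T]^T$ and $U_{i-1}$ is defined analogously from $u$. - The vector $$\kappa_{i-1}=\hat A_\nu^{k_i-k_{i-1}}\hat x(k_{i-1})+\sum_{l=k_{i-1}}^{k_i-1}\hat A_\nu^{k_i-l-1}\hat B_\nu u(l).$$ - For $k\in[k_i,k_{i+1})$, the corrected output $$\zeta_i(k)=y(k)-\hat D_\mu u(k)-\sum_{l=k_i}^{k-1}\hat C_\mu\hat A_\mu^{k-l-1}\hat B_\mu u(l),$$ where the sum is empty if $k=k_i$. - The stacked vector $Z_i=[\zeta_i(k_i)^T\cdots\zeta_i(k_i+q)^T]^T$. For $\nu\ne\mu$, let $\mathcal N_{\nu,\mu}=\{i\in[1,i^*]:\varphi(k_{i-1})=\nu,\ \varphi(k_i)=\mu\}$. Let $\Psi_{\nu,\mu}$ be the matrix whose columns are the vectors $\kappa_{i-1}$, and let $\mathcal Z_{\nu,\mu}$ be the matrix whose columns are the vectors $Z_i$, in both cases for $i\in\mathcal N_{\nu,\mu}$ taken in increasing order. *)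

theory Defs
  imports "Jordan_Normal_Form.DL_Rank"
begin

definition mrank :: "real mat \<Rightarrow> nat" where
  "mrank M = vec_space.rank (dim_row M) M"

text \<open>Inverse of an invertible square matrix (unspecified otherwise).\<close>
definition minv :: "real mat \<Rightarrow> real mat" where
  "minv M = (SOME B. B \<in> carrier_mat (dim_row M) (dim_row M) \<and> inverts_mat M B \<and> inverts_mat B M)"

definition pinv_left :: "real mat \<Rightarrow> real mat" where
  "pinv_left M = minv (transpose_mat M * M) * transpose_mat M"

definition pinv_right :: "real mat \<Rightarrow> real mat" where
  "pinv_right M = transpose_mat M * minv (M * transpose_mat M)"

text \<open>Controllability matrix [B AB ... A^(n-1)B] and observability matrix
  [C; CA; ...; CA^(n-1)], n = dim_row A.\<close>
definition ctrb_mat :: "real mat \<Rightarrow> real mat \<Rightarrow> real mat" where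
  "ctrb_mat A B = mat (dim_row A) (dim_row A * dim_col B)
     (\<lambda>(r,c). (A ^\<^sub>m (c div dim_col B) * B) $$ (r, c mod dim_col B))"

definition obsv_mat :: "real mat \<Rightarrow> real mat \<Rightarrow> real mat" where
  "obsv_mat A C = mat (dim_row A * dim_row C) (dim_row A)
     (\<lambda>(r,c). (C * A ^\<^sub>m (r div dim_row C)) $$ (r mod dim_row C, c))"

definition minimal_deg :: "nat \<Rightarrow> nat \<Rightarrow> nat \<Rightarrow> real mat \<Rightarrow> real mat \<Rightarrow> real mat \<Rightarrow> real mat \<Rightarrow> bool" where
  "minimal_deg n m p A B C D \<longleftrightarrow>
     A \<in> carrier_mat n n \<and> B \<in> carrier_mat n m \<and> C \<in> carrier_mat p n \<and> D \<in> carrier_mat p m \<and>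
     mrank (ctrb_mat A B) = n \<and> mrank (obsv_mat A C) = n"

definition zs_output :: "real mat \<Rightarrow> real mat \<Rightarrow> real mat \<Rightarrow> real mat \<Rightarrow> (nat \<Rightarrow> real vec) \<Rightarrow> nat \<Rightarrow> real vec" where
  "zs_output A B C D u k = D *\<^sub>v u k +
     vec (dim_row C) (\<lambda>c. \<Sum>l<k. (C * A ^\<^sub>m (k - l - 1) * B *\<^sub>v u l) $ c)"

definition bibo_stable :: "real mat \<Rightarrow> real mat \<Rightarrow> real mat \<Rightarrow> real mat \<Rightarrow> bool" where
  "bibo_stable A B C D \<longleftrightarrow>
     (\<forall>u. (\<forall>k. u k \<in> carrier_vec (dim_col B)) \<longrightarrow>
          (\<exists>M. \<forall>k i. i < dim_col B \<longrightarrow> \<bar>u k $ i\<bar> \<le> M) \<longrightarrow>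
          (\<exists>M. \<forall>k i. i < dim_row C \<longrightarrow> \<bar>zs_output A B C D u k $ i\<bar> \<le> M))"

definition dwell_min :: "(nat \<Rightarrow> nat) \<Rightarrow> nat \<Rightarrow> nat" where
  "dwell_min ks istar = Min ((\<lambda>i. ks (Suc i) - ks i) ` {0..istar})"

text \<open>Extended observability matrix [C; CA; ...; CA^q] (block rows 0..q).\<close>
definition ext_obs :: "nat \<Rightarrow> real mat \<Rightarrow> real mat \<Rightarrow> real mat" where
  "ext_obs q A C = mat ((q+1) * dim_row C) (dim_col C)
     (\<lambda>(r,c). (C * A ^\<^sub>m (r div dim_row C)) $$ (r mod dim_row C, c))"

text \<open>Block lower-triangular Toeplitz matrix with (q+1)x(q+1) blocks: diagonal D,
  block (r,s) = C A^(r-s-1) B for r > s, zero above the diagonal.\<close>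
definition toeplitz_blk :: "nat \<Rightarrow> real mat \<Rightarrow> real mat \<Rightarrow> real mat \<Rightarrow> real mat \<Rightarrow> real mat" where
  "toeplitz_blk q A B C D = mat ((q+1) * dim_row D) ((q+1) * dim_col D)
     (\<lambda>(r,c). (let a = r div dim_row D; b = c div dim_col D in
        (if a = b then D else if b < a then C * A ^\<^sub>m (a - b - 1) * B
         else 0\<^sub>m (dim_row D) (dim_col D))) $$ (r mod dim_row D, c mod dim_col D))"

text \<open>Stacked vector [w(k); w(k+1); ...; w(k+q)] with blocks of size d.\<close>
definition stackv :: "nat \<Rightarrow> nat \<Rightarrow> (nat \<Rightarrow> real vec) \<Rightarrow> nat \<Rightarrow> real vec" where
  "stackv q d w k = vec ((q+1) * d) (\<lambda>j. w (k + j div d) $ (j mod d))"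

definition xhat :: "nat \<Rightarrow> real mat \<Rightarrow> real mat \<Rightarrow> real mat \<Rightarrow> real mat \<Rightarrow>
    (nat \<Rightarrow> real vec) \<Rightarrow> (nat \<Rightarrow> real vec) \<Rightarrow> nat \<Rightarrow> real vec" where
  "xhat q A B C D u y k =
     pinv_left (ext_obs q A C) *\<^sub>v
       (stackv q (dim_row C) y k - toeplitz_blk q A B C D *\<^sub>v stackv q (dim_col B) u k)"

definition kappa :: "nat \<Rightarrow> real mat \<Rightarrow> real mat \<Rightarrow> real mat \<Rightarrow> real mat \<Rightarrow>
    (nat \<Rightarrow> real vec) \<Rightarrow> (nat \<Rightarrow> real vec) \<Rightarrow> nat \<Rightarrow> nat \<Rightarrow> real vec" where
  "kappa q A B C D u y k k' = vec (dim_row A) (\<lambda>c.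
      (A ^\<^sub>m (k' - k) *\<^sub>v xhat q A B C D u y k) $ c +
      (\<Sum>l\<in>{k..<k'}. (A ^\<^sub>m (k' - l - 1) * B *\<^sub>v u l) $ c))"

definition zeta :: "real mat \<Rightarrow> real mat \<Rightarrow> real mat \<Rightarrow> real mat \<Rightarrow>
    (nat \<Rightarrow> real vec) \<Rightarrow> (nat \<Rightarrow> real vec) \<Rightarrow> nat \<Rightarrow> nat \<Rightarrow> real vec" where
  "zeta A B C D u y ki k = y k - D *\<^sub>v u k -
     vec (dim_row C) (\<lambda>c. \<Sum>l\<in>{ki..<k}. (C * A ^\<^sub>m (k - l - 1) * B *\<^sub>v u l) $ c)"

definition trans_set :: "(nat \<Rightarrow> nat) \<Rightarrow> (nat \<Rightarrow> nat) \<Rightarrow> nat \<Rightarrow> nat \<Rightarrow> nat \<Rightarrow> nat set" where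
  "trans_set phi ks istar \<nu> \<mu> = {i \<in> {1..istar}. phi (ks (i - 1)) = \<nu> \<and> phi (ks i) = \<mu>}"

definition cols_of :: "nat \<Rightarrow> nat set \<Rightarrow> (nat \<Rightarrow> real vec) \<Rightarrow> real mat" where
  "cols_of d I v = mat d (card I) (\<lambda>(r,c). v (sorted_list_of_set I ! c) $ r)"

end

theory Submission
  imports Defs
begin

lemma minv_ex:
  assumes M: "M \<in> carrier_mat k k" and B: "B \<in> carrier_mat k k"
    and MB: "M * B = 1\<^sub>m k" and BM: "B * M = 1\<^sub>m k"
  shows "minv M \<in> carrier_mat k k \<and> M * minv M = 1\<^sub>m k \<and> minv M * M = 1\<^sub>m k"
proof -
  let ?P = "\<lambda>X. X \<in> carrier_mat (dim_row M) (dim_row M) \<and> inverts_mat M X \<and> inverts_mat X M"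
  have "?P B" using M B MB BM by (auto simp: inverts_mat_def)
  hence "?P (minv M)" unfolding minv_def by (rule someI)
  thus ?thesis using M by (auto simp: inverts_mat_def)
qed

lemma minv_invertible:
  assumes M: "M \<in> carrier_mat k k" and inv: "invertible_mat M"
  shows "minv M \<in> carrier_mat k k \<and> M * minv M = 1\<^sub>m k \<and> minv M * M = 1\<^sub>m k"
proof -
  obtain B where 1: "M * B = 1\<^sub>m (dim_row M)" and 2: "B * M = 1\<^sub>m (dim_row B)"
    using inv unfolding invertible_mat_def inverts_mat_def by blast
  have "dim_col B = k" using arg_cong[OF 1, of dim_col] M by simp
  moreover have "dim_row B = k" using arg_cong[OF 2, of dim_col] M by simp
  ultimately have B: "B \<in> carrier_mat k k" by auto
  show ?thesis using minv_ex[OF M B] 1 2 M B by auto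
qed

lemma minv_det:
  assumes M: "M \<in> carrier_mat k k" and d: "det M \<noteq> (0::real)"
  shows "minv M \<in> carrier_mat k k \<and> M * minv M = 1\<^sub>m k \<and> minv M * M = 1\<^sub>m k"
proof -
  have "M \<in> Units (ring_mat TYPE(real) k ())" by (rule det_non_zero_imp_unit[OF M d])
  then obtain B where "B \<in> carrier_mat k k" "M * B = 1\<^sub>m k" "B * M = 1\<^sub>m k"
    unfolding Units_def ring_mat_def by auto
  thus ?thesis using minv_ex[OF M] by blast
qed

lemma rank_distinct:
  assumes M: "(M::real mat) \<in> carrier_mat r c" and rk: "vec_space.rank r M = c"
  shows "distinct (cols M)"
proof (rule ccontr)
  interpret vec_space "TYPE(real)" r .
  assume nd: "\<not> distinct (cols M)"
  obtain S where S: "maximal S (\<lambda>T. T \<subseteq> set (cols M) \<and> lin_indpt T)"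
    using maximal_exists[of "(\<lambda>T. T \<subseteq> set (cols M) \<and> lin_indpt T)" "card (set (cols M))" "{}"]
    by (meson List.finite_set card_mono empty_iff empty_subsetI finite_lin_indpt2 rev_finite_subset)
  then have "card S \<le> card (set (cols M))" by (simp add: card_mono maximal_def)
  also have "\<dots> < c" using nd M card_distinct cols_length card_length carrier_matD(2)
    by (metis le_neq_implies_less)
  finally have "card S < c" .
  thus False using rank_card_indpt[OF M S] rk by simp
qed

lemma rank_inj:
  assumes M: "(M::real mat) \<in> carrier_mat r c" and rk: "vec_space.rank r M = c"
    and v: "v \<in> carrier_vec c" and Mv: "M *\<^sub>v v = 0\<^sub>v r"
  shows "v = 0\<^sub>v c"
proof (rule ccontr)
  interpret vec_space "TYPE(real)" r .
  assume "v \<noteq> 0\<^sub>v c"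
  have d: "distinct (cols M)" by (rule rank_distinct[OF M rk])
  have "lin_indpt (set (cols M))"
    using full_rank_lin_indpt[OF M rk d] .
  moreover have "lin_dep (set (cols M))"
    using lin_depI[OF M v \<open>v \<noteq> 0\<^sub>v c\<close> Mv d] .
  ultimately show False by simp
qed

lemma sprod_self_zero:
  assumes "(v::real vec) \<bullet> v = 0" shows "v = 0\<^sub>v (dim_vec v)"
proof -
  have "(\<Sum>i\<in>{0..<dim_vec v}. v $ i * v $ i) = 0" using assms by (simp add: scalar_prod_def)
  hence "\<forall>i\<in>{0..<dim_vec v}. v $ i * v $ i = 0"
    by (subst (asm) sum_nonneg_eq_0_iff) auto
  thus ?thesis by (intro eq_vecI) auto
qed

lemma gram_det:
  assumes W: "(W::real mat) \<in> carrier_mat r c"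
    and inj: "\<And>v. v \<in> carrier_vec c \<Longrightarrow> W *\<^sub>v v = 0\<^sub>v r \<Longrightarrow> v = 0\<^sub>v c"
  shows "det (W\<^sup>T * W) \<noteq> 0"
proof
  assume "det (W\<^sup>T * W) = 0"
  moreover have G: "W\<^sup>T * W \<in> carrier_mat c c" using W by auto
  ultimately obtain v where v: "v \<in> carrier_vec c" "v \<noteq> 0\<^sub>v c" "(W\<^sup>T * W) *\<^sub>v v = 0\<^sub>v c"
    using det_0_iff_vec_prod_zero_field[OF G] by blast
  have "(W\<^sup>T * W) *\<^sub>v v = W\<^sup>T *\<^sub>v (W *\<^sub>v v)" using W v by (auto intro: assoc_mult_mat_vec)
  hence "(W\<^sup>T *\<^sub>v (W *\<^sub>v v)) \<bullet> v = 0" using v by (metis scalar_prod_left_zero)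
  have "(W *\<^sub>v v) \<bullet> (W *\<^sub>v v) = 0"
  proof -
    have "W *\<^sub>v v \<in> carrier_vec r" using W by (rule mult_mat_vec_carrier) (rule v(1))
    from transpose_vec_mult_scalar[OF W v(1) this] show ?thesis using \<open>(W\<^sup>T *\<^sub>v (W *\<^sub>v v)) \<bullet> v = 0\<close> by argo
  qed
  hence "W *\<^sub>v v = 0\<^sub>v (dim_vec (W *\<^sub>v v))" by (rule sprod_self_zero)
  hence "W *\<^sub>v v = 0\<^sub>v r" using W by simp
  thus False using inj v by blast
qed

lemma full_row_rank_inj:
  assumes P: "(P::real mat) \<in> carrier_mat k c" and rk: "vec_space.rank k P = k"
    and w: "w \<in> carrier_vec k" and Pw: "P\<^sup>T *\<^sub>v w = 0\<^sub>v c"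
  shows "w = 0\<^sub>v k"
proof -
  interpret vec_space "TYPE(real)" k .
  obtain S where S: "maximal S (\<lambda>T. T \<subseteq> set (cols P) \<and> lin_indpt T)"
    using maximal_exists[of "(\<lambda>T. T \<subseteq> set (cols P) \<and> lin_indpt T)" "card (set (cols P))" "{}"]
    by (meson List.finite_set card_mono empty_iff empty_subsetI finite_lin_indpt2 rev_finite_subset)
  have cS: "card S = k" using rank_card_indpt[OF P S] rk by simp
  have SP: "S \<subseteq> set (cols P)" and li: "lin_indpt S" using S by (auto simp: maximal_def)
  have fS: "finite S" using SP finite_subset by blast
  obtain ss where ss: "set ss = S" "distinct ss" using finite_distinct_list[OF fS] by blast
  have lss: "length ss = k" using ss cS distinct_card by fastforce
  have Sc: "set ss \<subseteq> carrier_vec k" using SP ss P cols_dim by blast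
  define Q where "Q = mat_of_cols k ss"
  have Q: "Q \<in> carrier_mat k k" using lss by (simp add: Q_def mat_of_cols_def)
  have cQ: "cols Q = ss" using cols_mat_of_cols[OF Sc] by (simp add: Q_def)
  have "rank Q = k" using lin_indpt_full_rank[OF Q] cQ ss li by simp
  hence dQ: "det Q \<noteq> 0" using det_rank_iff[OF Q] by simp
  have "det Q\<^sup>T \<noteq> 0" using dQ det_transpose[OF Q] by simp
  moreover have QT: "Q\<^sup>T \<in> carrier_mat k k" using Q by simp
  moreover have "Q\<^sup>T *\<^sub>v w = 0\<^sub>v k"
  proof (rule eq_vecI)
    fix i assume "i < dim_vec (0\<^sub>v k :: real vec)"
    hence i: "i < k" by simp
    have "ss ! i \<in> set (cols P)" using SP ss i lss by auto
    then obtain j where j: "j < dim_col P" "ss ! i = col P j"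
      by (metis cols_length cols_nth in_set_conv_nth)
    have "(Q\<^sup>T *\<^sub>v w) $ i = ss ! i \<bullet> w"
      using i Q cQ lss by (simp add: cols_nth[symmetric])
    also have "\<dots> = (P\<^sup>T *\<^sub>v w) $ j" using j P by simp
    also have "\<dots> = 0" using Pw j P by simp
    finally show "(Q\<^sup>T *\<^sub>v w) $ i = 0\<^sub>v k $ i" using i by simp
  qed (insert Q, simp)
  ultimately show ?thesis using det_0_iff_vec_prod_zero_field[OF QT] w by blast
qed

lemma mult_vsum:
  assumes A: "(A::real mat) \<in> carrier_mat r k" and f: "\<And>l. l \<in> L \<Longrightarrow> f l \<in> carrier_vec k"
  shows "A *\<^sub>v vec k (\<lambda>c. \<Sum>l\<in>L. f l $ c) = vec r (\<lambda>c. \<Sum>l\<in>L. (A *\<^sub>v f l) $ c)"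
proof (rule eq_vecI)
  fix i assume "i < dim_vec (vec r (\<lambda>c. \<Sum>l\<in>L. (A *\<^sub>v f l) $ c))"
  hence i: "i < r" by simp
  have "(A *\<^sub>v vec k (\<lambda>c. \<Sum>l\<in>L. f l $ c)) $ i = (\<Sum>j<k. A $$ (i,j) * (\<Sum>l\<in>L. f l $ j))"
    using A i by (simp add: scalar_prod_def lessThan_atLeast0)
  also have "\<dots> = (\<Sum>l\<in>L. \<Sum>j<k. A $$ (i,j) * f l $ j)"
    by (simp add: sum_distrib_left sum.swap[of _ L])
  also have "\<dots> = (\<Sum>l\<in>L. (A *\<^sub>v f l) $ i)"
  proof (rule sum.cong[OF refl])
    fix l assume "l \<in> L"
    hence fl: "dim_vec (f l) = k" using f by auto
    show "(\<Sum>j<k. A $$ (i,j) * f l $ j) = (A *\<^sub>v f l) $ i"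
      using A i fl by (auto simp: scalar_prod_def lessThan_atLeast0 intro!: sum.cong)
  qed
  finally show "(A *\<^sub>v vec k (\<lambda>c. \<Sum>l\<in>L. f l $ c)) $ i = vec r (\<lambda>c. \<Sum>l\<in>L. (A *\<^sub>v f l) $ c) $ i"
    using i by simp
qed (insert A, simp)

lemma pow_mat_Suc_left:
  assumes A: "(A::real mat) \<in> carrier_mat n n"
  shows "A ^\<^sub>m Suc k = A * A ^\<^sub>m k"
proof (induction k)
  case 0 thus ?case using A by simp
next
  case (Suc k)
  have "A ^\<^sub>m Suc (Suc k) = (A * A ^\<^sub>m k) * A" using Suc by simp
  also have "\<dots> = A * (A ^\<^sub>m k * A)" using A by (intro assoc_mult_mat) auto
  finally show ?case by simp
qed

lemma vec_plus_eq:
  assumes "a \<in> carrier_vec n" "b \<in> carrier_vec n"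
  shows "vec n (\<lambda>c. a $ c + b $ c) = a + b"
  using assms by (intro eq_vecI) auto

lemma pmb_carrier:
  assumes "(A::real mat) \<in> carrier_mat n n" "B \<in> carrier_mat n m" "u \<in> carrier_vec m"
  shows "A ^\<^sub>m k * B *\<^sub>v u \<in> carrier_vec n"
  using assms by (meson mult_carrier_mat mult_mat_vec_carrier pow_carrier_mat)

lemma evol:
  assumes A: "(A::real mat) \<in> carrier_mat n n" and B: "B \<in> carrier_mat n m"
    and st: "\<And>l. k0 \<le> l \<Longrightarrow> l < k0 + L \<Longrightarrow> x (Suc l) = A *\<^sub>v x l + B *\<^sub>v u l"
    and ud: "\<And>l. k0 \<le> l \<Longrightarrow> l < k0 + L \<Longrightarrow> u l \<in> carrier_vec m"
    and x0: "x k0 \<in> carrier_vec n"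
  shows "x (k0+L) = vec n (\<lambda>c. (A ^\<^sub>m L *\<^sub>v x k0) $ c +
            (\<Sum>l\<in>{k0..<k0+L}. (A ^\<^sub>m (k0+L-l-1) * B *\<^sub>v u l) $ c))"
  using st ud
proof (induction L)
  case 0
  show ?case using A x0 by (intro eq_vecI) auto
next
  case (Suc L)
  define S where "S = vec n (\<lambda>c. \<Sum>l\<in>{k0..<k0+L}. (A ^\<^sub>m (k0+L-l-1) * B *\<^sub>v u l) $ c)"
  have S: "S \<in> carrier_vec n" by (simp add: S_def)
  have ax: "A ^\<^sub>m L *\<^sub>v x k0 \<in> carrier_vec n" using mult_mat_vec_carrier[OF pow_carrier_mat[OF A] x0] .
  have IH: "x (k0+L) = A ^\<^sub>m L *\<^sub>v x k0 + S"
    using Suc.IH[OF Suc.prems(1) Suc.prems(2)] vec_plus_eq[OF ax, of S] S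
    unfolding S_def by auto
  have ul: "u (k0+L) \<in> carrier_vec m" using Suc.prems(2) by simp
  have "x (k0 + Suc L) = A *\<^sub>v x (k0+L) + B *\<^sub>v u (k0+L)" using Suc.prems(1)[of "k0+L"] by simp
  also have "\<dots> = A *\<^sub>v (A ^\<^sub>m L *\<^sub>v x k0) + A *\<^sub>v S + B *\<^sub>v u (k0+L)"
    using IH A ax S by (simp add: mult_add_distrib_mat_vec)
  also have "A *\<^sub>v (A ^\<^sub>m L *\<^sub>v x k0) = A ^\<^sub>m Suc L *\<^sub>v x k0"
    using assoc_mult_mat_vec[OF A pow_carrier_mat[OF A] x0, of L] pow_mat_Suc_left[OF A, of L] by simp
  also have "A *\<^sub>v S = vec n (\<lambda>c. \<Sum>l\<in>{k0..<k0+L}. (A *\<^sub>v (A ^\<^sub>m (k0+L-l-1) * B *\<^sub>v u l)) $ c)"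
    unfolding S_def using A B Suc.prems(2) by (intro mult_vsum) (auto intro!: pmb_carrier)
  also have "\<dots> = vec n (\<lambda>c. \<Sum>l\<in>{k0..<k0+L}. (A ^\<^sub>m (k0+Suc L-l-1) * B *\<^sub>v u l) $ c)"
  proof -
   have "(A *\<^sub>v (A ^\<^sub>m (k0+L-l-1) * B *\<^sub>v u l)) $ c = (A ^\<^sub>m (k0+Suc L-l-1) * B *\<^sub>v u l) $ c"
     if "l \<in> {k0..<k0+L}" for c l
   proof -
    have e: "k0 + Suc L - l - 1 = Suc (k0+L-l-1)" and ul': "u l \<in> carrier_vec m"
      using Suc.prems(2)[of l] that by auto
    have "A *\<^sub>v (A ^\<^sub>m (k0+L-l-1) * B *\<^sub>v u l) = (A * (A ^\<^sub>m (k0+L-l-1) * B)) *\<^sub>v u l"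
      using assoc_mult_mat_vec[OF A mult_carrier_mat[OF pow_carrier_mat[OF A] B] ul'] by simp
    also have "A * (A ^\<^sub>m (k0+L-l-1) * B) = A ^\<^sub>m (k0+Suc L-l-1) * B"
      unfolding e pow_mat_Suc_left[OF A] using assoc_mult_mat[OF A pow_carrier_mat[OF A] B] by simp
    finally show ?thesis by simp
   qed
   thus ?thesis by (intro arg_cong[where f="vec n"] ext sum.cong[OF refl]) auto
  qed
  finally show ?case
  proof (intro eq_vecI)
    fix c assume "c < dim_vec (vec n (\<lambda>c. (A ^\<^sub>m Suc L *\<^sub>v x k0) $ c +
            (\<Sum>l\<in>{k0..<k0+Suc L}. (A ^\<^sub>m (k0+Suc L-l-1) * B *\<^sub>v u l) $ c)))"
    hence c: "c < n" by simp
    assume eq: "x (k0 + Suc L) = A ^\<^sub>m Suc L *\<^sub>v x k0 +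
      vec n (\<lambda>c. \<Sum>l\<in>{k0..<k0+L}. (A ^\<^sub>m (k0+Suc L-l-1) * B *\<^sub>v u l) $ c) + B *\<^sub>v u (k0+L)"
    have "{k0..<k0+Suc L} = insert (k0+L) {k0..<k0+L}" by auto
    hence sp: "(\<Sum>l\<in>{k0..<k0+Suc L}. (A ^\<^sub>m (k0+Suc L-l-1) * B *\<^sub>v u l) $ c) =
       (B *\<^sub>v u (k0+L)) $ c + (\<Sum>l\<in>{k0..<k0+L}. (A ^\<^sub>m (k0+Suc L-l-1) * B *\<^sub>v u l) $ c)"
      using A B by simp
    show "x (k0 + Suc L) $ c = vec n (\<lambda>c. (A ^\<^sub>m Suc L *\<^sub>v x k0) $ c +
            (\<Sum>l\<in>{k0..<k0+Suc L}. (A ^\<^sub>m (k0+Suc L-l-1) * B *\<^sub>v u l) $ c)) $ c"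
      unfolding eq sp using c A B by simp
  qed (insert A B x0 ul, simp_all)
qed

lemma hat_pow:
  assumes T: "(T::real mat) \<in> carrier_mat n n" and Ti: "Ti \<in> carrier_mat n n"
    and TTi: "T * Ti = 1\<^sub>m n" and TiT: "Ti * T = 1\<^sub>m n" and A: "A \<in> carrier_mat n n"
  shows "(Ti * A * T) ^\<^sub>m k = Ti * A ^\<^sub>m k * T"
proof (induction k)
  case 0 show ?case using Ti A T TiT by simp
next
  case (Suc k)
  have Ak: "A ^\<^sub>m k \<in> carrier_mat n n" using A by simp
  have X1: "Ti * A ^\<^sub>m k \<in> carrier_mat n n" using mult_carrier_mat[OF Ti Ak] .
  have AT: "A * T \<in> carrier_mat n n" using mult_carrier_mat[OF A T] .
  have TiA: "Ti * A \<in> carrier_mat n n" using mult_carrier_mat[OF Ti A] .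
  have TiAT: "Ti * A * T \<in> carrier_mat n n" using mult_carrier_mat[OF TiA T] .
  have "(Ti * A * T) ^\<^sub>m Suc k = (Ti * A ^\<^sub>m k * T) * (Ti * A * T)" using Suc by simp
  also have "\<dots> = (Ti * A ^\<^sub>m k) * (T * (Ti * A * T))"
    using assoc_mult_mat[OF X1 T TiAT] .
  also have "T * (Ti * A * T) = A * T"
  proof -
    have "T * (Ti * A * T) = T * (Ti * (A * T))" using assoc_mult_mat[OF Ti A T] by simp
    also have "\<dots> = (T * Ti) * (A * T)" using assoc_mult_mat[OF T Ti AT] by simp
    also have "\<dots> = A * T" using TTi left_mult_one_mat[OF AT] by simp
    finally show ?thesis .
  qed
  also have "(Ti * A ^\<^sub>m k) * (A * T) = (Ti * A ^\<^sub>m k) * A * T"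
    using assoc_mult_mat[OF X1 A T] by simp
  also have "(Ti * A ^\<^sub>m k) * A = Ti * (A ^\<^sub>m k * A)" using assoc_mult_mat[OF Ti Ak A] .
  finally show ?case by simp
qed

lemma hat_CA:
  assumes T: "(T::real mat) \<in> carrier_mat n n" and Ti: "Ti \<in> carrier_mat n n"
    and TTi: "T * Ti = 1\<^sub>m n" and TiT: "Ti * T = 1\<^sub>m n" and A: "A \<in> carrier_mat n n"
    and C: "C \<in> carrier_mat p n"
  shows "(C * T) * (Ti * A * T) ^\<^sub>m k = C * A ^\<^sub>m k * T"
proof -
  have Ak: "A ^\<^sub>m k \<in> carrier_mat n n" using A by simp
  have CT: "C * T \<in> carrier_mat p n" using mult_carrier_mat[OF C T] .
  have TiAk: "Ti * A ^\<^sub>m k \<in> carrier_mat n n" using mult_carrier_mat[OF Ti Ak] .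
  have CTTi: "C * T * Ti \<in> carrier_mat p n" using mult_carrier_mat[OF CT Ti] .
  have "(C * T) * (Ti * A ^\<^sub>m k * T) = (C * T) * (Ti * A ^\<^sub>m k) * T"
    using assoc_mult_mat[OF CT TiAk T] by simp
  also have "(C * T) * (Ti * A ^\<^sub>m k) = (C * T * Ti) * A ^\<^sub>m k"
    using assoc_mult_mat[OF CT Ti Ak] by simp
  also have "C * T * Ti = C" using assoc_mult_mat[OF C T Ti] TTi right_mult_one_mat[OF C] by simp
  finally show ?thesis using hat_pow[OF T Ti TTi TiT A] by simp
qed

lemma hat_AB:
  assumes T: "(T::real mat) \<in> carrier_mat n n" and Ti: "Ti \<in> carrier_mat n n"
    and TTi: "T * Ti = 1\<^sub>m n" and TiT: "Ti * T = 1\<^sub>m n" and A: "A \<in> carrier_mat n n"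
    and B: "B \<in> carrier_mat n m"
  shows "(Ti * A * T) ^\<^sub>m k * (Ti * B) = Ti * (A ^\<^sub>m k * B)"
proof -
  have Ak: "A ^\<^sub>m k \<in> carrier_mat n n" using A by simp
  have TiAk: "Ti * A ^\<^sub>m k \<in> carrier_mat n n" using mult_carrier_mat[OF Ti Ak] .
  have TiB: "Ti * B \<in> carrier_mat n m" using mult_carrier_mat[OF Ti B] .
  have "(Ti * A ^\<^sub>m k * T) * (Ti * B) = (Ti * A ^\<^sub>m k) * (T * (Ti * B))"
    using assoc_mult_mat[OF TiAk T TiB] .
  also have "T * (Ti * B) = B" using assoc_mult_mat[OF T Ti B] TTi left_mult_one_mat[OF B] by simp
  also have "(Ti * A ^\<^sub>m k) * B = Ti * (A ^\<^sub>m k * B)" using assoc_mult_mat[OF Ti Ak B] .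
  finally show ?thesis using hat_pow[OF T Ti TTi TiT A] by simp
qed

lemma hat_CAB:
  assumes T: "(T::real mat) \<in> carrier_mat n n" and Ti: "Ti \<in> carrier_mat n n"
    and TTi: "T * Ti = 1\<^sub>m n" and TiT: "Ti * T = 1\<^sub>m n" and A: "A \<in> carrier_mat n n"
    and B: "B \<in> carrier_mat n m" and C: "C \<in> carrier_mat p n"
  shows "(C * T) * (Ti * A * T) ^\<^sub>m k * (Ti * B) = C * A ^\<^sub>m k * B"
proof -
  have Ak: "A ^\<^sub>m k \<in> carrier_mat n n" using A by simp
  have CT: "C * T \<in> carrier_mat p n" using mult_carrier_mat[OF C T] .
  have TiB: "Ti * B \<in> carrier_mat n m" using mult_carrier_mat[OF Ti B] .
  have H: "(Ti * A * T) ^\<^sub>m k \<in> carrier_mat n n"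
    using pow_carrier_mat[OF mult_carrier_mat[OF mult_carrier_mat[OF Ti A] T]] .
  have "(C * T) * (Ti * A * T) ^\<^sub>m k * (Ti * B) = (C * A ^\<^sub>m k * T) * (Ti * B)"
    using hat_CA[OF T Ti TTi TiT A C] by simp
  also have "\<dots> = (C * A ^\<^sub>m k) * (T * (Ti * B))"
    using assoc_mult_mat[OF mult_carrier_mat[OF C Ak] T TiB] .
  also have "T * (Ti * B) = B" using assoc_mult_mat[OF T Ti B] TTi left_mult_one_mat[OF B] by simp
  finally show ?thesis .
qed

lemma window_out:
  assumes A: "(A::real mat) \<in> carrier_mat n n" and B: "B \<in> carrier_mat n m"
    and C: "C \<in> carrier_mat p n" and D: "D \<in> carrier_mat p m"
    and st: "\<And>l. k0 \<le> l \<Longrightarrow> l < k0 + a \<Longrightarrow> x (Suc l) = A *\<^sub>v x l + B *\<^sub>v u l"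
    and ud: "\<And>l. k0 \<le> l \<Longrightarrow> l < k0 + a \<Longrightarrow> u l \<in> carrier_vec m"
    and x0: "x k0 \<in> carrier_vec n"
    and ya: "y (k0+a) = C *\<^sub>v x (k0+a) + D *\<^sub>v u (k0+a)"
    and ua: "u (k0+a) \<in> carrier_vec m"
    and r: "r < p"
  shows "y (k0+a) $ r - (D *\<^sub>v u (k0+a)) $ r
      - (\<Sum>l\<in>{k0..<k0+a}. (C * A ^\<^sub>m (k0+a-l-1) * B *\<^sub>v u l) $ r) = (C * A ^\<^sub>m a *\<^sub>v x k0) $ r"
proof -
  define S where "S = vec n (\<lambda>c. \<Sum>l\<in>{k0..<k0+a}. (A ^\<^sub>m (k0+a-l-1) * B *\<^sub>v u l) $ c)"
  have Sc: "S \<in> carrier_vec n" by (simp add: S_def)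
  have ax: "A ^\<^sub>m a *\<^sub>v x k0 \<in> carrier_vec n" using mult_mat_vec_carrier[OF pow_carrier_mat[OF A] x0] .
  have e1: "x (k0+a) = vec n (\<lambda>c. (A ^\<^sub>m a *\<^sub>v x k0) $ c +
            (\<Sum>l\<in>{k0..<k0+a}. (A ^\<^sub>m (k0+a-l-1) * B *\<^sub>v u l) $ c))"
    by (rule evol[OF A B st ud x0])
  have e2: "vec n (\<lambda>c. (A ^\<^sub>m a *\<^sub>v x k0) $ c +
            (\<Sum>l\<in>{k0..<k0+a}. (A ^\<^sub>m (k0+a-l-1) * B *\<^sub>v u l) $ c)) = vec n (\<lambda>c. (A ^\<^sub>m a *\<^sub>v x k0) $ c + S $ c)"
    unfolding S_def by (intro eq_vecI) auto
  have xa: "x (k0+a) = A ^\<^sub>m a *\<^sub>v x k0 + S"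
    using e1 e2 vec_plus_eq[OF ax Sc] by simp
  have CS: "C *\<^sub>v S = vec p (\<lambda>c. \<Sum>l\<in>{k0..<k0+a}. (C *\<^sub>v (A ^\<^sub>m (k0+a-l-1) * B *\<^sub>v u l)) $ c)"
    unfolding S_def using C A B ud by (intro mult_vsum) (auto intro!: pmb_carrier)
  have CS2: "(C *\<^sub>v S) $ r = (\<Sum>l\<in>{k0..<k0+a}. (C * A ^\<^sub>m (k0+a-l-1) * B *\<^sub>v u l) $ r)"
  proof -
    have "(C *\<^sub>v (A ^\<^sub>m (k0+a-l-1) * B *\<^sub>v u l)) = (C * A ^\<^sub>m (k0+a-l-1) * B *\<^sub>v u l)"
      if "l \<in> {k0..<k0+a}" for l
    proof -
      have ul: "u l \<in> carrier_vec m" using ud that by auto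
      have "C * A ^\<^sub>m (k0+a-l-1) * B = C * (A ^\<^sub>m (k0+a-l-1) * B)"
        using assoc_mult_mat[OF C pow_carrier_mat[OF A] B] .
      thus ?thesis using assoc_mult_mat_vec[OF C mult_carrier_mat[OF pow_carrier_mat[OF A] B] ul] by simp
    qed
    thus ?thesis unfolding CS using r by simp
  qed
  have CAx: "C * A ^\<^sub>m a *\<^sub>v x k0 = C *\<^sub>v (A ^\<^sub>m a *\<^sub>v x k0)"
    using assoc_mult_mat_vec[OF C pow_carrier_mat[OF A] x0] .
  have "y (k0+a) = C *\<^sub>v (A ^\<^sub>m a *\<^sub>v x k0) + C *\<^sub>v S + D *\<^sub>v u (k0+a)"
    using ya xa mult_add_distrib_mat_vec[OF C ax Sc] by simp
  hence "y (k0+a) $ r = (C *\<^sub>v (A ^\<^sub>m a *\<^sub>v x k0)) $ r + (C *\<^sub>v S) $ r + (D *\<^sub>v u (k0+a)) $ r"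
    using r C D by simp
  thus ?thesis using CS2 CAx by simp
qed

lemma sum_div_mod:
  fixes g :: "nat \<Rightarrow> nat \<Rightarrow> real"
  shows "(\<Sum>c<Q*m. g (c div m) (c mod m)) = (\<Sum>b<Q. \<Sum>s<m. g b s)"
proof (induction Q)
  case 0 show ?case by simp
next
  case (Suc Q)
  have "{..<Suc Q * m} = {..<Q*m} \<union> {Q*m..<Q*m+m}" by auto
  hence "(\<Sum>c<Suc Q*m. g (c div m) (c mod m)) = (\<Sum>c<Q*m. g (c div m) (c mod m)) + (\<Sum>c\<in>{Q*m..<Q*m+m}. g (c div m) (c mod m))"
    by (metis (no_types, lifting) finite_atLeastLessThan finite_lessThan ivl_disj_int_one(2) sum.union_disjoint)
  also have "(\<Sum>c\<in>{Q*m..<Q*m+m}. g (c div m) (c mod m)) = (\<Sum>s<m. g Q s)"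
  proof -
    have "(\<Sum>c\<in>{Q*m..<Q*m+m}. g (c div m) (c mod m)) = (\<Sum>s\<in>{0..<m}. g ((s + Q*m) div m) ((s + Q*m) mod m))"
      using sum.shift_bounds_nat_ivl[of "\<lambda>c. g (c div m) (c mod m)" 0 "Q*m" m] by (simp add: add.commute)
    also have "\<dots> = (\<Sum>s<m. g Q s)" by (intro sum.cong) auto
    finally show ?thesis .
  qed
  finally show ?case using Suc by simp
qed

lemma toep_mv:
  assumes A: "(A::real mat) \<in> carrier_mat n n" and B: "B \<in> carrier_mat n m"
    and C: "C \<in> carrier_mat p n" and D: "D \<in> carrier_mat p m"
    and ud: "\<And>b. b \<le> q \<Longrightarrow> u (k+b) \<in> carrier_vec m"
    and j: "j < (q+1)*p"
  shows "(toeplitz_blk q A B C D *\<^sub>v stackv q m u k) $ j =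
    (D *\<^sub>v u (k + j div p)) $ (j mod p) +
    (\<Sum>l\<in>{k..<k + j div p}. (C * A ^\<^sub>m (k + j div p - l - 1) * B *\<^sub>v u l) $ (j mod p))"
proof -
  define a where "a = j div p"
  define r where "r = j mod p"
  have p0: "p > 0" using j by (cases p) auto
  have a: "a \<le> q" unfolding a_def using less_mult_imp_div_less[OF j] by simp
  have r: "r < p" unfolding r_def using p0 by simp
  define blk where "blk b = (if a = b then D else if b < a then C * A ^\<^sub>m (a - b - 1) * B else 0\<^sub>m p m)" for b
  have blkc: "blk b \<in> carrier_mat p m" for b
    unfolding blk_def using A B C D by (auto intro: mult_carrier_mat)
  have dD: "dim_row D = p" "dim_col D = m" using D by auto
  have "(toeplitz_blk q A B C D *\<^sub>v stackv q m u k) $ j =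
     (\<Sum>c<(q+1)*m. blk (c div m) $$ (r, c mod m) * u (k + c div m) $ (c mod m))"
    unfolding blk_def a_def r_def using j dD
    by (auto simp: toeplitz_blk_def stackv_def scalar_prod_def Let_def lessThan_atLeast0 intro!: sum.cong)
  also have "\<dots> = (\<Sum>b<q+1. \<Sum>s<m. blk b $$ (r, s) * u (k + b) $ s)"
    by (rule sum_div_mod[where g = "\<lambda>b s. blk b $$ (r, s) * u (k + b) $ s"])
  also have "\<dots> = (\<Sum>b<q+1. (blk b *\<^sub>v u (k+b)) $ r)"
  proof (rule sum.cong[OF refl])
    fix b assume "b \<in> {..<q+1}"
    hence "u (k+b) \<in> carrier_vec m" using ud by auto
    thus "(\<Sum>s<m. blk b $$ (r, s) * u (k + b) $ s) = (blk b *\<^sub>v u (k+b)) $ r"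
      using blkc[of b] r by (simp add: scalar_prod_def lessThan_atLeast0)
  qed
  also have "\<dots> = (\<Sum>b<a. (blk b *\<^sub>v u (k+b)) $ r) + (blk a *\<^sub>v u (k+a)) $ r
       + (\<Sum>b\<in>{Suc a..<q+1}. (blk b *\<^sub>v u (k+b)) $ r)"
  proof -
    have "{..<q+1} = {..<Suc a} \<union> {Suc a..<q+1}" using a by auto
    hence "(\<Sum>b<q+1. (blk b *\<^sub>v u (k+b)) $ r) = (\<Sum>b<Suc a. (blk b *\<^sub>v u (k+b)) $ r)
       + (\<Sum>b\<in>{Suc a..<q+1}. (blk b *\<^sub>v u (k+b)) $ r)"
      by (metis (no_types, lifting) finite_atLeastLessThan finite_lessThan ivl_disj_int_one(2) sum.union_disjoint)
    thus ?thesis by simp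
  qed
  also have "(\<Sum>b\<in>{Suc a..<q+1}. (blk b *\<^sub>v u (k+b)) $ r) = 0"
    using ud by (intro sum.neutral) (auto simp: blk_def r)
  also have "(blk a *\<^sub>v u (k+a)) $ r = (D *\<^sub>v u (k+a)) $ r" by (simp add: blk_def)
  also have "(\<Sum>b<a. (blk b *\<^sub>v u (k+b)) $ r) = (\<Sum>b<a. (C * A ^\<^sub>m (a - b - 1) * B *\<^sub>v u (k+b)) $ r)"
    by (intro sum.cong) (auto simp: blk_def)
  also have "\<dots> = (\<Sum>l\<in>{k..<k + a}. (C * A ^\<^sub>m (k + a - l - 1) * B *\<^sub>v u l) $ r)"
  proof -
    have "(\<Sum>l\<in>{0+k..<a+k}. (C * A ^\<^sub>m (k + a - l - 1) * B *\<^sub>v u l) $ r)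
       = (\<Sum>b\<in>{0..<a}. (C * A ^\<^sub>m (k + a - (b+k) - 1) * B *\<^sub>v u (b+k)) $ r)"
      by (rule sum.shift_bounds_nat_ivl)
    thus ?thesis by (simp add: lessThan_atLeast0 add.commute)
  qed
  finally show ?thesis unfolding a_def r_def by simp
qed

lemma ext_obs_carrier:
  assumes C: "C \<in> carrier_mat p n"
  shows "ext_obs q A C \<in> carrier_mat ((q+1)*p) n"
  using C by (simp add: ext_obs_def)

lemma ext_obs_mv:
  assumes A: "(A::real mat) \<in> carrier_mat n n" and C: "C \<in> carrier_mat p n"
    and w: "w \<in> carrier_vec n" and j: "j < (q+1)*p"
  shows "(ext_obs q A C *\<^sub>v w) $ j = (C * A ^\<^sub>m (j div p) *\<^sub>v w) $ (j mod p)"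
proof -
  have p0: "p > 0" using j by (cases p) auto
  have r: "j mod p < p" using p0 by simp
  show ?thesis using A C w j r
    by (auto simp: ext_obs_def scalar_prod_def intro!: sum.cong)
qed

lemma obsv_mv:
  assumes A: "(A::real mat) \<in> carrier_mat n n" and C: "C \<in> carrier_mat p n"
    and w: "w \<in> carrier_vec n" and j: "j < n*p"
  shows "(obsv_mat A C *\<^sub>v w) $ j = (C * A ^\<^sub>m (j div p) *\<^sub>v w) $ (j mod p)"
proof -
  have p0: "p > 0" using j by (cases p) auto
  have r: "j mod p < p" using p0 by simp
  show ?thesis using A C w j r
    by (auto simp: obsv_mat_def scalar_prod_def intro!: sum.cong)
qed

lemma ext_obs_inj:
  assumes T: "(T::real mat) \<in> carrier_mat n n" and Ti: "Ti \<in> carrier_mat n n"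
    and TTi: "T * Ti = 1\<^sub>m n" and TiT: "Ti * T = 1\<^sub>m n" and A: "A \<in> carrier_mat n n"
    and C: "C \<in> carrier_mat p n" and rk: "mrank (obsv_mat A C) = n" and qn: "n \<le> q + 1"
    and v: "v \<in> carrier_vec n" and Ov: "ext_obs q (Ti * A * T) (C * T) *\<^sub>v v = 0\<^sub>v ((q+1)*p)"
  shows "v = 0\<^sub>v n"
proof -
  have Ah: "Ti * A * T \<in> carrier_mat n n" using Ti A T by (meson mult_carrier_mat)
  have Ch: "C * T \<in> carrier_mat p n" using C T by (meson mult_carrier_mat)
  define z where "z = T *\<^sub>v v"
  have z: "z \<in> carrier_vec n" unfolding z_def using mult_mat_vec_carrier[OF T v] .
  have Oc: "obsv_mat A C \<in> carrier_mat (n*p) n" using A C by (simp add: obsv_mat_def)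
  have "obsv_mat A C *\<^sub>v z = 0\<^sub>v (n*p)"
  proof (rule eq_vecI)
    fix j assume "j < dim_vec (0\<^sub>v (n*p) :: real vec)"
    hence j: "j < n*p" by simp
    have j2: "j < (q+1)*p" using j qn by (meson less_le_trans mult_le_mono1)
    have "(obsv_mat A C *\<^sub>v z) $ j = (C * A ^\<^sub>m (j div p) *\<^sub>v z) $ (j mod p)"
      by (rule obsv_mv[OF A C z j])
    also have "C * A ^\<^sub>m (j div p) *\<^sub>v z = (C * A ^\<^sub>m (j div p) * T) *\<^sub>v v"
      unfolding z_def using assoc_mult_mat_vec[OF mult_carrier_mat[OF C pow_carrier_mat[OF A]] T v] by simp
    also have "C * A ^\<^sub>m (j div p) * T = (C * T) * (Ti * A * T) ^\<^sub>m (j div p)"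
      using hat_CA[OF T Ti TTi TiT A C] by simp
    also have "((C * T) * (Ti * A * T) ^\<^sub>m (j div p) *\<^sub>v v) $ (j mod p) = (ext_obs q (Ti * A * T) (C * T) *\<^sub>v v) $ j"
      using ext_obs_mv[OF Ah Ch v j2] by simp
    finally show "(obsv_mat A C *\<^sub>v z) $ j = 0\<^sub>v (n*p) $ j" using Ov j j2 by simp
  qed (insert Oc, simp)
  hence "z = 0\<^sub>v n" using rank_inj[OF Oc _ z] rk Oc unfolding mrank_def by simp
  hence "Ti *\<^sub>v z = 0\<^sub>v n" using Ti by (intro eq_vecI) auto
  moreover have "Ti *\<^sub>v z = v" unfolding z_def
    using assoc_mult_mat_vec[OF Ti T v] TiT v by simp
  ultimately show ?thesis by simp
qed

lemma core_eq:
  assumes T: "(T::real mat) \<in> carrier_mat n n" and Ti: "Ti \<in> carrier_mat n n"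
    and TTi: "T * Ti = 1\<^sub>m n" and TiT: "Ti * T = 1\<^sub>m n" and A: "A \<in> carrier_mat n n"
    and B: "B \<in> carrier_mat n m" and C: "C \<in> carrier_mat p n" and D: "D \<in> carrier_mat p m"
    and st: "\<And>l. k0 \<le> l \<Longrightarrow> l < k0 + q \<Longrightarrow> x (Suc l) = A *\<^sub>v x l + B *\<^sub>v u l"
    and yq: "\<And>l. k0 \<le> l \<Longrightarrow> l \<le> k0 + q \<Longrightarrow> y l = C *\<^sub>v x l + D *\<^sub>v u l"
    and ud: "\<And>l. k0 \<le> l \<Longrightarrow> l \<le> k0 + q \<Longrightarrow> u l \<in> carrier_vec m"
    and x0: "x k0 \<in> carrier_vec n"
    and j: "j < (q+1)*p"
  shows "y (k0 + j div p) $ (j mod p) - (D *\<^sub>v u (k0 + j div p)) $ (j mod p)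
     - (\<Sum>l\<in>{k0..<k0 + j div p}. ((C * T) * (Ti * A * T) ^\<^sub>m (k0 + j div p - l - 1) * (Ti * B) *\<^sub>v u l) $ (j mod p))
     = (ext_obs q (Ti * A * T) (C * T) *\<^sub>v (Ti *\<^sub>v x k0)) $ j"
proof -
  define a where "a = j div p"
  define r where "r = j mod p"
  have p0: "p > 0" using j by (cases p) auto
  have a: "a \<le> q" unfolding a_def using less_mult_imp_div_less[OF j] by simp
  have r: "r < p" unfolding r_def using p0 by simp
  have Ah: "Ti * A * T \<in> carrier_mat n n" using Ti A T by (meson mult_carrier_mat)
  have Ch: "C * T \<in> carrier_mat p n" using C T by (meson mult_carrier_mat)
  have Tix: "Ti *\<^sub>v x k0 \<in> carrier_vec n" using mult_mat_vec_carrier[OF Ti x0] .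
  have "(\<Sum>l\<in>{k0..<k0 + a}. ((C * T) * (Ti * A * T) ^\<^sub>m (k0 + a - l - 1) * (Ti * B) *\<^sub>v u l) $ r)
      = (\<Sum>l\<in>{k0..<k0 + a}. (C * A ^\<^sub>m (k0 + a - l - 1) * B *\<^sub>v u l) $ r)"
    using hat_CAB[OF T Ti TTi TiT A B C] by simp
  also have "y (k0+a) $ r - (D *\<^sub>v u (k0+a)) $ r - \<dots> = (C * A ^\<^sub>m a *\<^sub>v x k0) $ r"
    by (rule window_out[where x=x and ?k0.0=k0 and a=a and u=u and y=y and r=r, OF A B C D _ _ x0 _ _ r])
       (use st yq ud a in auto)
  also have "C * A ^\<^sub>m a *\<^sub>v x k0 = (C * A ^\<^sub>m a * T) *\<^sub>v (Ti *\<^sub>v x k0)"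
  proof -
    have CA: "C * A ^\<^sub>m a \<in> carrier_mat p n" using mult_carrier_mat[OF C pow_carrier_mat[OF A]] .
    have "(C * A ^\<^sub>m a * T) *\<^sub>v (Ti *\<^sub>v x k0) = C * A ^\<^sub>m a *\<^sub>v (T *\<^sub>v (Ti *\<^sub>v x k0))"
      using assoc_mult_mat_vec[OF CA T Tix] .
    also have "T *\<^sub>v (Ti *\<^sub>v x k0) = x k0" using assoc_mult_mat_vec[OF T Ti x0] TTi x0 by simp
    finally show ?thesis by simp
  qed
  also have "C * A ^\<^sub>m a * T = (C * T) * (Ti * A * T) ^\<^sub>m a" using hat_CA[OF T Ti TTi TiT A C] by simp
  also have "((C * T) * (Ti * A * T) ^\<^sub>m a *\<^sub>v (Ti *\<^sub>v x k0)) $ r = (ext_obs q (Ti * A * T) (C * T) *\<^sub>v (Ti *\<^sub>v x k0)) $ j"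
    using ext_obs_mv[OF Ah Ch Tix j] unfolding a_def r_def by simp
  finally show ?thesis unfolding a_def r_def .
qed

lemma pinv_left_cancel:
  assumes W: "(W::real mat) \<in> carrier_mat r c"
    and inj: "\<And>v. v \<in> carrier_vec c \<Longrightarrow> W *\<^sub>v v = 0\<^sub>v r \<Longrightarrow> v = 0\<^sub>v c"
    and w: "w \<in> carrier_vec c"
  shows "pinv_left W *\<^sub>v (W *\<^sub>v w) = w"
proof -
  have G: "W\<^sup>T * W \<in> carrier_mat c c" using W by auto
  have WT: "W\<^sup>T \<in> carrier_mat c r" using W by auto
  obtain Gi where Gi: "minv (W\<^sup>T * W) = Gi" by simp
  have Gp: "Gi \<in> carrier_mat c c" "Gi * (W\<^sup>T * W) = 1\<^sub>m c"
    using minv_det[OF G gram_det[OF W inj]] Gi by auto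
  have Ww: "W *\<^sub>v w \<in> carrier_vec r" using mult_mat_vec_carrier[OF W w] .
  have "pinv_left W *\<^sub>v (W *\<^sub>v w) = Gi *\<^sub>v (W\<^sup>T *\<^sub>v (W *\<^sub>v w))"
    unfolding pinv_left_def Gi using assoc_mult_mat_vec[OF Gp(1) WT Ww] .
  also have "W\<^sup>T *\<^sub>v (W *\<^sub>v w) = (W\<^sup>T * W) *\<^sub>v w" using assoc_mult_mat_vec[OF WT W w] by simp
  also have "Gi *\<^sub>v ((W\<^sup>T * W) *\<^sub>v w) = (Gi * (W\<^sup>T * W)) *\<^sub>v w" using assoc_mult_mat_vec[OF Gp(1) G w] by simp
  also have "\<dots> = w" using Gp(2) w by simp
  finally show ?thesis .
qed

lemma xhat_eq:
  assumes T: "(T::real mat) \<in> carrier_mat n n" and Ti: "Ti \<in> carrier_mat n n"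
    and TTi: "T * Ti = 1\<^sub>m n" and TiT: "Ti * T = 1\<^sub>m n" and A: "A \<in> carrier_mat n n"
    and B: "B \<in> carrier_mat n m" and C: "C \<in> carrier_mat p n" and D: "D \<in> carrier_mat p m"
    and rk: "mrank (obsv_mat A C) = n" and qn: "n \<le> q + 1"
    and st: "\<And>l. k0 \<le> l \<Longrightarrow> l < k0 + q \<Longrightarrow> x (Suc l) = A *\<^sub>v x l + B *\<^sub>v u l"
    and yq: "\<And>l. k0 \<le> l \<Longrightarrow> l \<le> k0 + q \<Longrightarrow> y l = C *\<^sub>v x l + D *\<^sub>v u l"
    and ud: "\<And>l. k0 \<le> l \<Longrightarrow> l \<le> k0 + q \<Longrightarrow> u l \<in> carrier_vec m"
    and x0: "x k0 \<in> carrier_vec n"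
  shows "xhat q (Ti * A * T) (Ti * B) (C * T) D u y k0 = Ti *\<^sub>v x k0"
proof -
  have Ah: "Ti * A * T \<in> carrier_mat n n" using Ti A T by (meson mult_carrier_mat)
  have Bh: "Ti * B \<in> carrier_mat n m" using Ti B by (meson mult_carrier_mat)
  have Ch: "C * T \<in> carrier_mat p n" using C T by (meson mult_carrier_mat)
  have Tix: "Ti *\<^sub>v x k0 \<in> carrier_vec n" using mult_mat_vec_carrier[OF Ti x0] .
  define W where "W = ext_obs q (Ti * A * T) (C * T)"
  have W: "W \<in> carrier_mat ((q+1)*p) n" unfolding W_def using ext_obs_carrier[OF Ch] .
  have inj: "\<And>v. v \<in> carrier_vec n \<Longrightarrow> W *\<^sub>v v = 0\<^sub>v ((q+1)*p) \<Longrightarrow> v = 0\<^sub>v n"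
    unfolding W_def using ext_obs_inj[OF T Ti TTi TiT A C rk qn] by blast
  have dims: "dim_row (C * T) = p" "dim_col (Ti * B) = m" using Ch Bh by auto
  have dD: "dim_row D = p" using D by auto
  have Y: "stackv q p y k0 - toeplitz_blk q (Ti * A * T) (Ti * B) (C * T) D *\<^sub>v stackv q m u k0 = W *\<^sub>v (Ti *\<^sub>v x k0)"
  proof (rule eq_vecI)
    fix j assume "j < dim_vec (W *\<^sub>v (Ti *\<^sub>v x k0))"
    hence j: "j < (q+1)*p" using W by simp
    have tpd: "dim_row (toeplitz_blk q (Ti * A * T) (Ti * B) (C * T) D) = (q+1)*p"
      using dD by (simp add: toeplitz_blk_def)
    have "(stackv q p y k0 - toeplitz_blk q (Ti * A * T) (Ti * B) (C * T) D *\<^sub>v stackv q m u k0) $ j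
       = y (k0 + j div p) $ (j mod p) - (toeplitz_blk q (Ti * A * T) (Ti * B) (C * T) D *\<^sub>v stackv q m u k0) $ j"
      using j tpd by (simp add: stackv_def)
    also have "(toeplitz_blk q (Ti * A * T) (Ti * B) (C * T) D *\<^sub>v stackv q m u k0) $ j =
       (D *\<^sub>v u (k0 + j div p)) $ (j mod p) +
       (\<Sum>l\<in>{k0..<k0 + j div p}. ((C * T) * (Ti * A * T) ^\<^sub>m (k0 + j div p - l - 1) * (Ti * B) *\<^sub>v u l) $ (j mod p))"
      by (rule toep_mv[OF Ah Bh Ch D _ j]) (use ud in auto)
    finally show "(stackv q p y k0 - toeplitz_blk q (Ti * A * T) (Ti * B) (C * T) D *\<^sub>v stackv q m u k0) $ j
        = (W *\<^sub>v (Ti *\<^sub>v x k0)) $ j"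
      using core_eq[OF T Ti TTi TiT A B C D st yq ud x0 j] unfolding W_def by simp
  qed (insert W dD, simp add: stackv_def toeplitz_blk_def)
  show ?thesis unfolding xhat_def dims Y W_def[symmetric]
    using pinv_left_cancel[OF W inj Tix] .
qed

lemma zstack_eq:
  assumes T: "(T::real mat) \<in> carrier_mat n n" and Ti: "Ti \<in> carrier_mat n n"
    and TTi: "T * Ti = 1\<^sub>m n" and TiT: "Ti * T = 1\<^sub>m n" and A: "A \<in> carrier_mat n n"
    and B: "B \<in> carrier_mat n m" and C: "C \<in> carrier_mat p n" and D: "D \<in> carrier_mat p m"
    and st: "\<And>l. k0 \<le> l \<Longrightarrow> l < k0 + q \<Longrightarrow> x (Suc l) = A *\<^sub>v x l + B *\<^sub>v u l"
    and yq: "\<And>l. k0 \<le> l \<Longrightarrow> l \<le> k0 + q \<Longrightarrow> y l = C *\<^sub>v x l + D *\<^sub>v u l"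
    and ud: "\<And>l. k0 \<le> l \<Longrightarrow> l \<le> k0 + q \<Longrightarrow> u l \<in> carrier_vec m"
    and x0: "x k0 \<in> carrier_vec n"
  shows "stackv q p (zeta (Ti * A * T) (Ti * B) (C * T) D u y k0) k0 = ext_obs q (Ti * A * T) (C * T) *\<^sub>v (Ti *\<^sub>v x k0)"
proof -
  have Ch: "C * T \<in> carrier_mat p n" using C T by (meson mult_carrier_mat)
  have W: "ext_obs q (Ti * A * T) (C * T) \<in> carrier_mat ((q+1)*p) n" using ext_obs_carrier[OF Ch] .
  show ?thesis
  proof (rule eq_vecI)
    fix j assume "j < dim_vec (ext_obs q (Ti * A * T) (C * T) *\<^sub>v (Ti *\<^sub>v x k0))"
    hence j: "j < (q+1)*p" using W by simp
    have p0: "p > 0" using j by (cases p) auto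
    have r: "j mod p < p" using p0 by simp
    have "stackv q p (zeta (Ti * A * T) (Ti * B) (C * T) D u y k0) k0 $ j =
      y (k0 + j div p) $ (j mod p) - (D *\<^sub>v u (k0 + j div p)) $ (j mod p)
     - (\<Sum>l\<in>{k0..<k0 + j div p}. ((C * T) * (Ti * A * T) ^\<^sub>m (k0 + j div p - l - 1) * (Ti * B) *\<^sub>v u l) $ (j mod p))"
      using j r Ch D C by (simp add: stackv_def zeta_def)
    also have "\<dots> = (ext_obs q (Ti * A * T) (C * T) *\<^sub>v (Ti *\<^sub>v x k0)) $ j"
      by (rule core_eq[OF T Ti TTi TiT A B C D st yq ud x0 j])
    finally show "stackv q p (zeta (Ti * A * T) (Ti * B) (C * T) D u y k0) k0 $ j =
      (ext_obs q (Ti * A * T) (C * T) *\<^sub>v (Ti *\<^sub>v x k0)) $ j" .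
  qed (insert W, simp add: stackv_def)
qed

lemma kappa_eq:
  assumes T: "(T::real mat) \<in> carrier_mat n n" and Ti: "Ti \<in> carrier_mat n n"
    and TTi: "T * Ti = 1\<^sub>m n" and TiT: "Ti * T = 1\<^sub>m n" and A: "A \<in> carrier_mat n n"
    and B: "B \<in> carrier_mat n m"
    and xh: "xhat q (Ti * A * T) (Ti * B) C' D' u y k0 = Ti *\<^sub>v x k0"
    and st: "\<And>l. k0 \<le> l \<Longrightarrow> l < k1 \<Longrightarrow> x (Suc l) = A *\<^sub>v x l + B *\<^sub>v u l"
    and ud: "\<And>l. k0 \<le> l \<Longrightarrow> l < k1 \<Longrightarrow> u l \<in> carrier_vec m"
    and x0: "x k0 \<in> carrier_vec n" and k01: "k0 \<le> k1"
  shows "kappa q (Ti * A * T) (Ti * B) C' D' u y k0 k1 = Ti *\<^sub>v x k1"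
proof -
  define L where "L = k1 - k0"
  have k1: "k1 = k0 + L" unfolding L_def using k01 by simp
  have Ah: "Ti * A * T \<in> carrier_mat n n" using Ti A T by (meson mult_carrier_mat)
  have AL: "A ^\<^sub>m L *\<^sub>v x k0 \<in> carrier_vec n" using mult_mat_vec_carrier[OF pow_carrier_mat[OF A] x0] .
  define S where "S = vec n (\<lambda>c. \<Sum>l\<in>{k0..<k0+L}. (A ^\<^sub>m (k0+L-l-1) * B *\<^sub>v u l) $ c)"
  have Sc: "S \<in> carrier_vec n" by (simp add: S_def)
  have e1: "x (k0+L) = vec n (\<lambda>c. (A ^\<^sub>m L *\<^sub>v x k0) $ c +
            (\<Sum>l\<in>{k0..<k0+L}. (A ^\<^sub>m (k0+L-l-1) * B *\<^sub>v u l) $ c))"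
    by (rule evol[where ?k0.0=k0 and L=L and x=x and u=u, OF A B _ _ x0]) (use st ud k1 in auto)
  have e2: "vec n (\<lambda>c. (A ^\<^sub>m L *\<^sub>v x k0) $ c +
            (\<Sum>l\<in>{k0..<k0+L}. (A ^\<^sub>m (k0+L-l-1) * B *\<^sub>v u l) $ c)) = vec n (\<lambda>c. (A ^\<^sub>m L *\<^sub>v x k0) $ c + S $ c)"
    unfolding S_def by (intro eq_vecI) auto
  have xk1: "x k1 = A ^\<^sub>m L *\<^sub>v x k0 + S"
    using e1 e2 vec_plus_eq[OF AL Sc] k1 by simp
  have p1: "(Ti * A * T) ^\<^sub>m L *\<^sub>v (Ti *\<^sub>v x k0) = Ti *\<^sub>v (A ^\<^sub>m L *\<^sub>v x k0)"
  proof -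
    have TiAL: "Ti * A ^\<^sub>m L \<in> carrier_mat n n" using mult_carrier_mat[OF Ti pow_carrier_mat[OF A]] .
    have Tix: "Ti *\<^sub>v x k0 \<in> carrier_vec n" using mult_mat_vec_carrier[OF Ti x0] .
    have "(Ti * A ^\<^sub>m L * T) *\<^sub>v (Ti *\<^sub>v x k0) = (Ti * A ^\<^sub>m L) *\<^sub>v (T *\<^sub>v (Ti *\<^sub>v x k0))"
      using assoc_mult_mat_vec[OF TiAL T Tix] .
    also have "T *\<^sub>v (Ti *\<^sub>v x k0) = x k0" using assoc_mult_mat_vec[OF T Ti x0] TTi x0 by simp
    also have "(Ti * A ^\<^sub>m L) *\<^sub>v x k0 = Ti *\<^sub>v (A ^\<^sub>m L *\<^sub>v x k0)"
      using assoc_mult_mat_vec[OF Ti pow_carrier_mat[OF A] x0] .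
    finally show ?thesis using hat_pow[OF T Ti TTi TiT A] by simp
  qed
  have p2: "(Ti * A * T) ^\<^sub>m e * (Ti * B) *\<^sub>v u l = Ti *\<^sub>v (A ^\<^sub>m e * B *\<^sub>v u l)"
    if "u l \<in> carrier_vec m" for e l
    using hat_AB[OF T Ti TTi TiT A B] assoc_mult_mat_vec[OF Ti mult_carrier_mat[OF pow_carrier_mat[OF A] B] that] by simp
  have TiS: "Ti *\<^sub>v S = vec n (\<lambda>c. \<Sum>l\<in>{k0..<k0+L}. (Ti *\<^sub>v (A ^\<^sub>m (k0+L-l-1) * B *\<^sub>v u l)) $ c)"
    unfolding S_def using Ti A B ud k1 by (intro mult_vsum) (auto intro!: pmb_carrier)
  show ?thesis
  proof (rule eq_vecI)
    fix c assume "c < dim_vec (Ti *\<^sub>v x k1)"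
    hence c: "c < n" using Ti by simp
    have "kappa q (Ti * A * T) (Ti * B) C' D' u y k0 k1 $ c =
      (Ti *\<^sub>v (A ^\<^sub>m L *\<^sub>v x k0)) $ c + (\<Sum>l\<in>{k0..<k0+L}. (Ti *\<^sub>v (A ^\<^sub>m (k0+L-l-1) * B *\<^sub>v u l)) $ c)"
    proof -
      have "kappa q (Ti * A * T) (Ti * B) C' D' u y k0 k1 $ c =
        ((Ti * A * T) ^\<^sub>m (k1 - k0) *\<^sub>v xhat q (Ti * A * T) (Ti * B) C' D' u y k0) $ c +
        (\<Sum>l\<in>{k0..<k1}. ((Ti * A * T) ^\<^sub>m (k1 - l - 1) * (Ti * B) *\<^sub>v u l) $ c)"
        using c Ti by (simp add: kappa_def)
      also have "k1 - k0 = L" using k1 by simp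
      also have "xhat q (Ti * A * T) (Ti * B) C' D' u y k0 = Ti *\<^sub>v x k0" by (rule xh)
      also note p1
      also have "(\<Sum>l\<in>{k0..<k1}. ((Ti * A * T) ^\<^sub>m (k1 - l - 1) * (Ti * B) *\<^sub>v u l) $ c)
          = (\<Sum>l\<in>{k0..<k0+L}. (Ti *\<^sub>v (A ^\<^sub>m (k0+L-l-1) * B *\<^sub>v u l)) $ c)"
        unfolding k1[symmetric] using p2 ud by (intro sum.cong) auto
      finally show ?thesis .
    qed
    also have "\<dots> = (Ti *\<^sub>v (A ^\<^sub>m L *\<^sub>v x k0 + S)) $ c"
      using TiS c Ti AL Sc by (simp add: mult_add_distrib_mat_vec[OF Ti AL Sc])
    finally show "kappa q (Ti * A * T) (Ti * B) C' D' u y k0 k1 $ c = (Ti *\<^sub>v x k1) $ c"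
      using xk1 by simp
  qed (insert Ti, simp add: kappa_def)
qed

lemma cols_of_mult:
  assumes W: "(W::real mat) \<in> carrier_mat R c" and I: "finite I"
    and g: "\<And>i. i \<in> I \<Longrightarrow> g i \<in> carrier_vec c"
  shows "cols_of R I (\<lambda>i. W *\<^sub>v g i) = W * cols_of c I g"
proof (rule eq_matI)
  fix r k assume r: "r < dim_row (W * cols_of c I g)" and k: "k < dim_col (W * cols_of c I g)"
  hence r': "r < R" and k': "k < card I" using W by (auto simp: cols_of_def)
  have mem: "sorted_list_of_set I ! k \<in> I" using k' I
    by (metis length_sorted_list_of_set nth_mem set_sorted_list_of_set)
  have gd: "dim_vec (g (sorted_list_of_set I ! k)) = c" using g[OF mem] by auto
  show "cols_of R I (\<lambda>i. W *\<^sub>v g i) $$ (r, k) = (W * cols_of c I g) $$ (r, k)"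
    using r' k' W gd by (auto simp: cols_of_def scalar_prod_def intro!: sum.cong)
qed (insert W, auto simp: cols_of_def)

lemma cols_of_carrier: "cols_of d I v \<in> carrier_mat d (card I)"
  by (simp add: cols_of_def)

lemma final_alg:
  assumes W: "(W::real mat) \<in> carrier_mat R n" and M: "M \<in> carrier_mat n n" and P: "P \<in> carrier_mat n K"
    and dW: "det (W\<^sup>T * W) \<noteq> 0" and dP: "det (P * P\<^sup>T) \<noteq> 0"
  shows "pinv_left W * ((W * M) * P) * pinv_right P = M"
proof -
  have G: "W\<^sup>T * W \<in> carrier_mat n n" using W by auto
  have H: "P * P\<^sup>T \<in> carrier_mat n n" using P by auto
  have WT: "W\<^sup>T \<in> carrier_mat n R" using W by auto
  have PT: "P\<^sup>T \<in> carrier_mat K n" using P by auto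
  obtain Gi where Gi: "minv (W\<^sup>T * W) = Gi" by simp
  obtain Hi where Hi: "minv (P * P\<^sup>T) = Hi" by simp
  have Gp: "Gi \<in> carrier_mat n n" "Gi * (W\<^sup>T * W) = 1\<^sub>m n" using minv_det[OF G dW] Gi by auto
  have Hp: "Hi \<in> carrier_mat n n" "(P * P\<^sup>T) * Hi = 1\<^sub>m n" using minv_det[OF H dP] Hi by auto
  have WM: "W * M \<in> carrier_mat R n" using mult_carrier_mat[OF W M] .
  have MP: "M * P \<in> carrier_mat n K" using mult_carrier_mat[OF M P] .
  have GiWT: "Gi * W\<^sup>T \<in> carrier_mat n R" using mult_carrier_mat[OF Gp(1) WT] .
  have PTHi: "P\<^sup>T * Hi \<in> carrier_mat K n" using mult_carrier_mat[OF PT Hp(1)] .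
  have 1: "(Gi * W\<^sup>T) * ((W * M) * P) = M * P"
  proof -
    have "(W * M) * P = W * (M * P)" using assoc_mult_mat[OF W M P] .
    hence "(Gi * W\<^sup>T) * ((W * M) * P) = (Gi * W\<^sup>T) * W * (M * P)"
      using assoc_mult_mat[OF GiWT W MP] by simp
    also have "(Gi * W\<^sup>T) * W = Gi * (W\<^sup>T * W)" using assoc_mult_mat[OF Gp(1) WT W] .
    also have "\<dots> = 1\<^sub>m n" by (rule Gp(2))
    finally show ?thesis using left_mult_one_mat[OF MP] by simp
  qed
  have 2: "(M * P) * (P\<^sup>T * Hi) = M"
  proof -
    have "(M * P) * (P\<^sup>T * Hi) = M * (P * (P\<^sup>T * Hi))" using assoc_mult_mat[OF M P PTHi] .
    also have "P * (P\<^sup>T * Hi) = (P * P\<^sup>T) * Hi" using assoc_mult_mat[OF P PT Hp(1)] by simp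
    also have "\<dots> = 1\<^sub>m n" by (rule Hp(2))
    finally show ?thesis using right_mult_one_mat[OF M] by simp
  qed
  show ?thesis unfolding pinv_left_def pinv_right_def Gi Hi 1 2 ..
qed

lemma cols_of_cong:
  assumes "finite I" "\<And>i. i \<in> I \<Longrightarrow> f i = g i"
  shows "cols_of d I f = cols_of d I g"
proof -
  have "sorted_list_of_set I ! c \<in> I" if "c < card I" for c
    using that assms(1) by (metis length_sorted_list_of_set nth_mem set_sorted_list_of_set)
  thus ?thesis using assms(2) unfolding cols_of_def by (intro eq_matI) auto
qed

theorem theorem1:
  fixes n m p \<sigma> N istar :: nat
    and \<phi> ks :: "nat \<Rightarrow> nat"
    and A B C D T Ah Bh Ch Dh :: "nat \<Rightarrow> real mat"
    and x u y :: "nat \<Rightarrow> real vec"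
    and \<nu> \<mu> :: nat
  assumes n2: "n \<ge> 2"
    (* switching sequence: [1,N] \<rightarrow> {1..\<sigma>} surjective *)
    and phi_range: "\<forall>k\<in>{1..N}. \<phi> k \<in> {1..\<sigma>}"
    and phi_surj: "\<phi> ` {1..N} = {1..\<sigma>}"
    (* switching times k_0 = 1 < k_1 < ... < k_istar < k_(istar+1) = N *)
    and ks0: "ks 0 = 1"
    and ksN: "ks (Suc istar) = N"
    and ks_mono: "\<forall>i\<le>istar. ks i < ks (Suc i)"
    and phi_const: "\<forall>i\<le>istar. \<forall>k\<in>{ks i..<ks (Suc i)}. \<phi> k = \<phi> (ks i)"
    and phi_switch: "\<forall>i\<in>{1..istar}. \<phi> (ks i) \<noteq> \<phi> (ks (i - 1))"
    (* standing assumptions on the modes *)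
    and minimal: "\<forall>j\<in>{1..\<sigma>}. minimal_deg n m p (A j) (B j) (C j) (D j)"
    and A_inv: "\<forall>j\<in>{1..\<sigma>}. invertible_mat (A j)"
    and stable: "\<forall>j\<in>{1..\<sigma>}. bibo_stable (A j) (B j) (C j) (D j)"
    and dwell: "dwell_min ks istar \<ge> n"
    (* local estimates, similar via unknown nonsingular T_j *)
    and T_carrier: "\<forall>j\<in>{1..\<sigma>}. T j \<in> carrier_mat n n"
    and T_inv: "\<forall>j\<in>{1..\<sigma>}. invertible_mat (T j)"
    and Ah_def: "\<forall>j\<in>{1..\<sigma>}. Ah j = minv (T j) * A j * T j"
    and Bh_def: "\<forall>j\<in>{1..\<sigma>}. Bh j = minv (T j) * B j"
    and Ch_def: "\<forall>j\<in>{1..\<sigma>}. Ch j = C j * T j"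
    and Dh_def: "\<forall>j\<in>{1..\<sigma>}. Dh j = D j"
    (* the LSS trajectory *)
    and u_dim: "\<forall>k\<in>{1..N}. u k \<in> carrier_vec m"
    and x_dim: "\<forall>k\<in>{1..N}. x k \<in> carrier_vec n"
    and y_dim: "\<forall>k\<in>{1..N}. y k \<in> carrier_vec p"
    and state_eq: "\<forall>k\<in>{1..<N}. x (Suc k) = A (\<phi> k) *\<^sub>v x k + B (\<phi> k) *\<^sub>v u k"
    and output_eq: "\<forall>k\<in>{1..N}. y k = C (\<phi> k) *\<^sub>v x k + D (\<phi> k) *\<^sub>v u k"
    (* the pair (nu, mu) *)
    and nu_mem: "\<nu> \<in> {1..\<sigma>}" and mu_mem: "\<mu> \<in> {1..\<sigma>}" and nu_mu: "\<nu> \<noteq> \<mu>"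
    and N_ne: "trans_set \<phi> ks istar \<nu> \<mu> \<noteq> {}"
    and rank_Psi: "mrank (cols_of n (trans_set \<phi> ks istar \<nu> \<mu>)
        (\<lambda>i. kappa (dwell_min ks istar - 1) (Ah \<nu>) (Bh \<nu>) (Ch \<nu>) (Dh \<nu>) u y (ks (i - 1)) (ks i))) = n"
  shows "minv (T \<mu>) * T \<nu> =
     pinv_left (ext_obs (dwell_min ks istar - 1) (Ah \<mu>) (Ch \<mu>)) *
     cols_of ((dwell_min ks istar - 1 + 1) * p) (trans_set \<phi> ks istar \<nu> \<mu>)
       (\<lambda>i. stackv (dwell_min ks istar - 1) p (zeta (Ah \<mu>) (Bh \<mu>) (Ch \<mu>) (Dh \<mu>) u y (ks i)) (ks i)) *
     pinv_right (cols_of n (trans_set \<phi> ks istar \<nu> \<mu>)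
       (\<lambda>i. kappa (dwell_min ks istar - 1) (Ah \<nu>) (Bh \<nu>) (Ch \<nu>) (Dh \<nu>) u y (ks (i - 1)) (ks i)))"
proof -
  define q where "q = dwell_min ks istar - 1"
  define I where "I = trans_set \<phi> ks istar \<nu> \<mu>"
  have dpos: "dwell_min ks istar \<ge> 2" using dwell n2 by simp
  have q1: "dwell_min ks istar = q + 1" unfolding q_def using dpos by simp
  have qn: "n \<le> q + 1" using dwell q1 by simp
  have finI: "finite I" unfolding I_def trans_set_def by simp
  have ks_mono2: "\<And>j d. j + d \<le> Suc istar \<Longrightarrow> ks j \<le> ks (j + d)"
  proof -
    fix j d show "j + d \<le> Suc istar \<Longrightarrow> ks j \<le> ks (j + d)"
    proof (induction d)
      case 0 thus ?case by simp
    next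
      case (Suc d)
      hence "ks (j + d) < ks (Suc (j + d))" using ks_mono by simp
      thus ?case using Suc by simp
    qed
  qed
  have ks_ge1: "\<And>j. j \<le> Suc istar \<Longrightarrow> ks j \<ge> 1" using ks_mono2[of 0] ks0 by fastforce
  have ks_leN: "\<And>j. j \<le> Suc istar \<Longrightarrow> ks j \<le> N"
  proof -
    fix j assume j: "j \<le> Suc istar"
    have "ks j \<le> ks (j + (Suc istar - j))" using ks_mono2[of j "Suc istar - j"] j by simp
    thus "ks j \<le> N" using j ksN by simp
  qed
  have gap: "\<And>i. i \<le> istar \<Longrightarrow> ks i + q + 1 \<le> ks (Suc i)"
  proof -
    fix i assume i: "i \<le> istar"
    have "dwell_min ks istar \<le> ks (Suc i) - ks i" unfolding dwell_min_def using i by (intro Min_le) auto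
    thus "ks i + q + 1 \<le> ks (Suc i)" using q1 by linarith
  qed
  have nuS: "\<nu> \<in> {1..\<sigma>}" and muS: "\<mu> \<in> {1..\<sigma>}" using nu_mem mu_mem by auto
  have carr: "\<And>j. j \<in> {1..\<sigma>} \<Longrightarrow> A j \<in> carrier_mat n n \<and> B j \<in> carrier_mat n m \<and> C j \<in> carrier_mat p n
      \<and> D j \<in> carrier_mat p m \<and> mrank (obsv_mat (A j) (C j)) = n"
    using minimal unfolding minimal_deg_def by blast
  have Tinv: "\<And>j. j \<in> {1..\<sigma>} \<Longrightarrow> T j \<in> carrier_mat n n \<and> minv (T j) \<in> carrier_mat n n
      \<and> T j * minv (T j) = 1\<^sub>m n \<and> minv (T j) * T j = 1\<^sub>m n"
    using T_carrier T_inv minv_invertible by blast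
  obtain Av Bv Cv Dv Tv Tiv where nu_data: "A \<nu> = Av" "B \<nu> = Bv" "C \<nu> = Cv" "D \<nu> = Dv" "T \<nu> = Tv" "minv (T \<nu>) = Tiv"
    by blast
  obtain Am Bm Cm Dm Tm Tim where mu_data: "A \<mu> = Am" "B \<mu> = Bm" "C \<mu> = Cm" "D \<mu> = Dm" "T \<mu> = Tm" "minv (T \<mu>) = Tim"
    by blast
  have Av: "Av \<in> carrier_mat n n" and Bv: "Bv \<in> carrier_mat n m" and Cv: "Cv \<in> carrier_mat p n"
    and Dv: "Dv \<in> carrier_mat p m" and rkv: "mrank (obsv_mat Av Cv) = n"
    using carr[OF nuS] nu_data by auto
  have Am: "Am \<in> carrier_mat n n" and Bm: "Bm \<in> carrier_mat n m" and Cm: "Cm \<in> carrier_mat p n"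
    and Dm: "Dm \<in> carrier_mat p m" and rkm: "mrank (obsv_mat Am Cm) = n"
    using carr[OF muS] mu_data by auto
  have Tv: "Tv \<in> carrier_mat n n" and Tiv: "Tiv \<in> carrier_mat n n" and TTiv: "Tv * Tiv = 1\<^sub>m n"
    and TiTv: "Tiv * Tv = 1\<^sub>m n" using Tinv[OF nuS] nu_data by auto
  have Tm: "Tm \<in> carrier_mat n n" and Tim: "Tim \<in> carrier_mat n n" and TTim: "Tm * Tim = 1\<^sub>m n"
    and TiTm: "Tim * Tm = 1\<^sub>m n" using Tinv[OF muS] mu_data by auto
  have hv: "Ah \<nu> = Tiv * Av * Tv" "Bh \<nu> = Tiv * Bv" "Ch \<nu> = Cv * Tv" "Dh \<nu> = Dv"
    using Ah_def Bh_def Ch_def Dh_def nuS nu_data by auto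
  have hm: "Ah \<mu> = Tim * Am * Tm" "Bh \<mu> = Tim * Bm" "Ch \<mu> = Cm * Tm" "Dh \<mu> = Dm"
    using Ah_def Bh_def Ch_def Dh_def muS mu_data by auto
  have traj: "\<And>j l. l \<in> {1..N} \<Longrightarrow> \<phi> l = j \<Longrightarrow> y l = C j *\<^sub>v x l + D j *\<^sub>v u l \<and> u l \<in> carrier_vec m \<and> x l \<in> carrier_vec n"
    using output_eq u_dim x_dim by auto
  have trajs: "\<And>j l. l \<in> {1..<N} \<Longrightarrow> \<phi> l = j \<Longrightarrow> x (Suc l) = A j *\<^sub>v x l + B j *\<^sub>v u l"
    using state_eq by auto
  define kap where "kap = (\<lambda>i. kappa q (Ah \<nu>) (Bh \<nu>) (Ch \<nu>) (Dh \<nu>) u y (ks (i - 1)) (ks i))"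
  define Zi where "Zi = (\<lambda>i. stackv q p (zeta (Ah \<mu>) (Bh \<mu>) (Ch \<mu>) (Dh \<mu>) u y (ks i)) (ks i))"
  define W where "W = ext_obs q (Ah \<mu>) (Ch \<mu>)"
  define M where "M = Tim * Tv"
  have M: "M \<in> carrier_mat n n" unfolding M_def using mult_carrier_mat[OF Tim Tv] .
  have W: "W \<in> carrier_mat ((q+1)*p) n" unfolding W_def hm
    using ext_obs_carrier[OF mult_carrier_mat[OF Cm Tm]] .
  have per_i: "kap i = Tiv *\<^sub>v x (ks i) \<and> Zi i = W *\<^sub>v (Tim *\<^sub>v x (ks i)) \<and> x (ks i) \<in> carrier_vec n" if iI: "i \<in> I" for i
  proof -
    have i: "1 \<le> i" "i \<le> istar" "\<phi> (ks (i - 1)) = \<nu>" "\<phi> (ks i) = \<mu>"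
      using iI unfolding I_def trans_set_def by auto
    have si: "Suc (i - 1) = i" using i by simp
    have g1: "ks (i - 1) + q + 1 \<le> ks i" using gap[of "i - 1"] i si by simp
    have g2: "ks i + q + 1 \<le> ks (Suc i)" using gap[of i] i by simp
    have k0: "ks (i - 1) \<ge> 1" using ks_ge1[of "i - 1"] i by simp
    have k2: "ks (Suc i) \<le> N" using ks_leN[of "Suc i"] i by simp
    have modev: "\<And>l. ks (i - 1) \<le> l \<Longrightarrow> l < ks i \<Longrightarrow> \<phi> l = \<nu>"
    proof -
      fix l assume l: "ks (i - 1) \<le> l" "l < ks i"
      have i1: "i - 1 \<le> istar" using i by simp
      have "l \<in> {ks (i - 1)..<ks (Suc (i - 1))}" using l si by simp
      hence "\<phi> l = \<phi> (ks (i - 1))" by (rule phi_const[rule_format, OF i1])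
      thus "\<phi> l = \<nu>" using i by simp
    qed
    have modem: "\<And>l. ks i \<le> l \<Longrightarrow> l < ks (Suc i) \<Longrightarrow> \<phi> l = \<mu>"
    proof -
      fix l assume l: "ks i \<le> l" "l < ks (Suc i)"
      hence "l \<in> {ks i..<ks (Suc i)}" by simp
      hence "\<phi> l = \<phi> (ks i)" by (rule phi_const[rule_format, OF i(2)])
      thus "\<phi> l = \<mu>" using i by simp
    qed
    have stv: "\<And>l. ks (i - 1) \<le> l \<Longrightarrow> l < ks i \<Longrightarrow> x (Suc l) = Av *\<^sub>v x l + Bv *\<^sub>v u l"
    proof -
      fix l assume l: "ks (i - 1) \<le> l" "l < ks i"
      have "l \<in> {1..<N}" using l k0 g2 k2 by auto
      thus "x (Suc l) = Av *\<^sub>v x l + Bv *\<^sub>v u l" using trajs[of l \<nu>] modev[OF l] nu_data by auto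
    qed
    have yv: "\<And>l. ks (i - 1) \<le> l \<Longrightarrow> l < ks i \<Longrightarrow> y l = Cv *\<^sub>v x l + Dv *\<^sub>v u l \<and> u l \<in> carrier_vec m \<and> x l \<in> carrier_vec n"
    proof -
      fix l assume l: "ks (i - 1) \<le> l" "l < ks i"
      have "l \<in> {1..N}" using l k0 g2 k2 by auto
      thus "y l = Cv *\<^sub>v x l + Dv *\<^sub>v u l \<and> u l \<in> carrier_vec m \<and> x l \<in> carrier_vec n"
        using traj[of l \<nu>] modev[OF l] nu_data by auto
    qed
    have stm: "\<And>l. ks i \<le> l \<Longrightarrow> l < ks (Suc i) \<Longrightarrow> x (Suc l) = Am *\<^sub>v x l + Bm *\<^sub>v u l"
    proof -
      fix l assume l: "ks i \<le> l" "l < ks (Suc i)"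
      have "l \<in> {1..<N}" using l k0 g1 k2 by auto
      thus "x (Suc l) = Am *\<^sub>v x l + Bm *\<^sub>v u l" using trajs[of l \<mu>] modem[OF l] mu_data by auto
    qed
    have ym: "\<And>l. ks i \<le> l \<Longrightarrow> l < ks (Suc i) \<Longrightarrow> y l = Cm *\<^sub>v x l + Dm *\<^sub>v u l \<and> u l \<in> carrier_vec m \<and> x l \<in> carrier_vec n"
    proof -
      fix l assume l: "ks i \<le> l" "l < ks (Suc i)"
      have "l \<in> {1..N}" using l k0 g1 k2 by auto
      thus "y l = Cm *\<^sub>v x l + Dm *\<^sub>v u l \<and> u l \<in> carrier_vec m \<and> x l \<in> carrier_vec n"
        using traj[of l \<mu>] modem[OF l] mu_data by auto
    qed
    have x0: "x (ks (i - 1)) \<in> carrier_vec n" using yv[of "ks (i - 1)"] g1 by auto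
    have x1: "x (ks i) \<in> carrier_vec n" using ym[of "ks i"] g2 by auto
    have xh: "xhat q (Tiv * Av * Tv) (Tiv * Bv) (Cv * Tv) Dv u y (ks (i - 1)) = Tiv *\<^sub>v x (ks (i - 1))"
      by (rule xhat_eq[where x=x and u=u and y=y and ?k0.0="ks (i - 1)", OF Tv Tiv TTiv TiTv Av Bv Cv Dv rkv qn _ _ _ x0]) (use stv yv g1 in auto)
    have "kap i = Tiv *\<^sub>v x (ks i)"
      unfolding kap_def hv
      by (rule kappa_eq[where x=x and u=u and y=y and ?k0.0="ks (i - 1)" and ?k1.0="ks i", OF Tv Tiv TTiv TiTv Av Bv xh _ _ x0]) (use stv yv g1 in auto)
    moreover have "Zi i = W *\<^sub>v (Tim *\<^sub>v x (ks i))"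
      unfolding Zi_def W_def hm
      by (rule zstack_eq[where x=x and u=u and y=y and ?k0.0="ks i", OF Tm Tim TTim TiTm Am Bm Cm Dm _ _ _ x1]) (use stm ym g2 in auto)
    ultimately show ?thesis using x1 by simp
  qed
  have kapc: "kap i \<in> carrier_vec n" if "i \<in> I" for i
    using per_i[OF that] mult_mat_vec_carrier[OF Tiv] by metis
  have Zi_eq: "Zi i = (W * M) *\<^sub>v kap i" if "i \<in> I" for i
  proof -
    have xi: "x (ks i) \<in> carrier_vec n" and ki: "kap i = Tiv *\<^sub>v x (ks i)" and zi: "Zi i = W *\<^sub>v (Tim *\<^sub>v x (ks i))"
      using per_i[OF that] by auto
    have "(W * M) *\<^sub>v kap i = W *\<^sub>v (M *\<^sub>v kap i)" using assoc_mult_mat_vec[OF W M kapc[OF that]] .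
    also have "M *\<^sub>v kap i = Tim *\<^sub>v (Tv *\<^sub>v (Tiv *\<^sub>v x (ks i)))"
      unfolding M_def ki using assoc_mult_mat_vec[OF Tim Tv mult_mat_vec_carrier[OF Tiv xi]] .
    also have "Tv *\<^sub>v (Tiv *\<^sub>v x (ks i)) = x (ks i)"
      using assoc_mult_mat_vec[OF Tv Tiv xi] TTiv xi by simp
    finally show ?thesis using zi by simp
  qed
  define Psi where "Psi = cols_of n I kap"
  have Psi: "Psi \<in> carrier_mat n (card I)" unfolding Psi_def by (rule cols_of_carrier)
  have WM: "W * M \<in> carrier_mat ((q+1)*p) n" using mult_carrier_mat[OF W M] .
  have Zmat: "cols_of ((q+1)*p) I Zi = (W * M) * Psi"
  proof -
    have "cols_of ((q+1)*p) I Zi = cols_of ((q+1)*p) I (\<lambda>i. (W * M) *\<^sub>v kap i)"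
      using Zi_eq finI by (intro cols_of_cong) auto
    also have "\<dots> = (W * M) * Psi" unfolding Psi_def using cols_of_mult[OF WM finI kapc] .
    finally show ?thesis .
  qed
  have dW: "det (W\<^sup>T * W) \<noteq> 0"
  proof (rule gram_det[OF W])
    fix v assume "v \<in> carrier_vec n" "W *\<^sub>v v = 0\<^sub>v ((q+1)*p)"
    thus "v = 0\<^sub>v n" using ext_obs_inj[OF Tm Tim TTim TiTm Am Cm rkm qn] unfolding W_def hm by blast
  qed
  have rkP: "vec_space.rank n Psi = n"
    using rank_Psi Psi unfolding Psi_def kap_def q_def I_def mrank_def by simp
  have dP: "det (Psi * Psi\<^sup>T) \<noteq> 0"
  proof -
    have PT: "Psi\<^sup>T \<in> carrier_mat (card I) n" using Psi by simp
    have "det ((Psi\<^sup>T)\<^sup>T * Psi\<^sup>T) \<noteq> 0"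
    proof (rule gram_det[OF PT])
      fix v assume "v \<in> carrier_vec n" "Psi\<^sup>T *\<^sub>v v = 0\<^sub>v (card I)"
      thus "v = 0\<^sub>v n" using full_row_rank_inj[OF Psi rkP] by blast
    qed
    thus ?thesis by simp
  qed
  have fin: "pinv_left W * ((W * M) * Psi) * pinv_right Psi = M"
    by (rule final_alg[OF W M Psi dW dP])
  have H: "minv (T \<mu>) * T \<nu> = pinv_left W * cols_of ((q+1)*p) I Zi * pinv_right (cols_of n I kap)"
  proof -
    have mTm: "minv Tm = Tim" using mu_data(5) mu_data(6) by blast
    show ?thesis using fin mTm unfolding Zmat Psi_def[symmetric] M_def mu_data nu_data by simp
  qed
  show ?thesis using H[unfolded W_def Zi_def kap_def q_def I_def] .
qed

end
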